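(* Assume that $\Phi \in C^1(B_{r_0},\mathbf{R})$ satisfies the hypotheses described in the context (so that the abstract critical-point result recalled there applies) and furthermore that for all $n \geq 2$ and all $v \in V$ for which $G(\mathcal{L}_n v) > 0$, \[ G(\mathcal{L}_n v) < n^{q+1} G(v). \] Then there is a constant $C_9 \leq C_0$ depending only on $G$ such that, provided $\alpha/m \leq C_9$ and $(\mu/m)^{1/(q-1)} \leq C_0 r_0$, the critical point $v$ of $\Phi$ given by the abstract result recalled in the context has minimal period (with respect to $t$) equal to $2\pi$.
   Context: Let $\Omega := \mathbf{R}/2\pi\mathbf{Z} \times (0,\pi)$ and let $V$ be the Hilbert space of functions $v(t,x) = \eta(t+x) - \eta(t-x)$ with $\eta \in H^1(\mathbf{R}/2\pi\mathbf{Z})$ odd (equivalently $v = \sum_{j\ge1}\xi_j \cos(jt)\sin(jx)$ with $\sum j^2\xi_j^2<\infty$), endowed with the $H^1$ norm $\|v\|^2 = \int_\Omega v_t^2 + v_x^2$. For $n \in \mathbf{N}$ and $v(t,x)=\eta(t+x)-\eta(t-x)\in V$ set $(\mathcal{L}_n v)(t,x) := \eta(n(t+x)) - \eta(n(t-x))$. Let $B_{r_0} = \{v \in V : \|v\| < r_0\}$, $S$ the unit sphere of $V$, and consider $\Phi(v) = \frac{\mu}{2}\|v\|^2 - G(v) + R(v)$ on $B_{r_0}$, where $\mu > 0$ and: (H1) $G \in C^1(V,\mathbf{R})$ is positively homogeneous of degree $q+1$ with $q>1$ and $DG: V \to V^*$ is compact; (H2) $R \in C^1(B_{r_0},\mathbf{R})$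 and $DR: B_{r_0} \to V^*$ is compact; (H3) $R(0)=0$ and there is $\alpha>0$ with $|DR(v)[v]| \leq \alpha \|v\|^{q+1}$ for all $v \in B_{r_0}$. Assume $m := \sup_{v \neq 0} G(v)/\|v\|^{q+1} > 0$, and let $K_0 := \{v \in S : G(v) = m\}$ (nonempty and compact). The abstract result used is: there is a small constant $C_0>0$ depending only on $q$ such that if $\alpha/m \leq C_0$ and $(\mu/m)^{1/(q-1)} \leq C_0 r_0$, then $\Phi$ has a critical point $v \in B_{r_0}$ at level $c = \frac{q-1}{2} m \big(\frac{\mu}{(q+1)m}\big)^{\frac{q+1}{q-1}}[1 + O(\alpha/m)]$, and moreover $v = \big(\frac{\mu}{m(q+1)}\big)^{1/(q-1)} y$ with $\mathrm{dist}(y, K_0) \leq h(\alpha/m)$ for some function $h$ depending only on $G$ with $\lim_{s\to0}h(s)=0$. *)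

theory Defs
  imports Complex_Main
begin

text \<open>The space V is represented through the coefficient sequences xi of
  v(t,x) = sum_{j>=1} xi_j cos(jt) sin(jx) with sum j^2 xi_j^2 < infinity
  (the coefficient xi 0 is forced to be 0).\<close>

definition Vsp :: "(nat \<Rightarrow> real) set" where
  "Vsp = {\<xi>. \<xi> 0 = 0 \<and> summable (\<lambda>j. (real j * \<xi> j)^2)}"

definition vfun :: "(nat \<Rightarrow> real) \<Rightarrow> real \<Rightarrow> real \<Rightarrow> real" where
  "vfun \<xi> t x = (\<Sum>j. \<xi> j * cos (real j * t) * sin (real j * x))"

text \<open>H^1 norm: int_Omega v_t^2 + v_x^2 = pi^2 * sum_j j^2 xi_j^2.\<close>
definition vnorm :: "(nat \<Rightarrow> real) \<Rightarrow> real" where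
  "vnorm \<xi> = sqrt (pi^2 * (\<Sum>j. (real j * \<xi> j)^2))"

definition vadd :: "(nat \<Rightarrow> real) \<Rightarrow> (nat \<Rightarrow> real) \<Rightarrow> (nat \<Rightarrow> real)" where
  "vadd \<xi> \<zeta> = (\<lambda>j. \<xi> j + \<zeta> j)"

definition vsub :: "(nat \<Rightarrow> real) \<Rightarrow> (nat \<Rightarrow> real) \<Rightarrow> (nat \<Rightarrow> real)" where
  "vsub \<xi> \<zeta> = (\<lambda>j. \<xi> j - \<zeta> j)"

definition vscale :: "real \<Rightarrow> (nat \<Rightarrow> real) \<Rightarrow> (nat \<Rightarrow> real)" where
  "vscale a \<xi> = (\<lambda>j. a * \<xi> j)"

text \<open>The operator L_n: eta(s) |-> eta(n s), i.e. (L_n xi)_{jn} = xi_j, other coefficients 0.\<close>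
definition Ln :: "nat \<Rightarrow> (nat \<Rightarrow> real) \<Rightarrow> (nat \<Rightarrow> real)" where
  "Ln n \<xi> = (\<lambda>k. if n dvd k then \<xi> (k div n) else 0)"

definition vball :: "real \<Rightarrow> (nat \<Rightarrow> real) set" where
  "vball r = {\<xi> \<in> Vsp. vnorm \<xi> < r}"

definition vblf :: "((nat \<Rightarrow> real) \<Rightarrow> real) \<Rightarrow> bool" where
  "vblf L \<longleftrightarrow> (\<forall>x\<in>Vsp. \<forall>y\<in>Vsp. \<forall>a b. L (vadd (vscale a x) (vscale b y)) = a * L x + b * L y)
      \<and> (\<exists>K. \<forall>x\<in>Vsp. \<bar>L x\<bar> \<le> K * vnorm x)"

definition dnorm :: "((nat \<Rightarrow> real) \<Rightarrow> real) \<Rightarrow> real" where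
  "dnorm L = Sup {\<bar>L x\<bar> | x. x \<in> Vsp \<and> vnorm x \<le> 1}"

definition vhasderiv :: "(nat \<Rightarrow> real) set \<Rightarrow> ((nat \<Rightarrow> real) \<Rightarrow> real) \<Rightarrow> (nat \<Rightarrow> real)
    \<Rightarrow> ((nat \<Rightarrow> real) \<Rightarrow> real) \<Rightarrow> bool" where
  "vhasderiv U F v L \<longleftrightarrow> vblf L \<and> (\<forall>\<epsilon>>0. \<exists>\<delta>>0. \<forall>h\<in>Vsp. vnorm h < \<delta> \<longrightarrow> vadd v h \<in> U \<longrightarrow>
      \<bar>F (vadd v h) - F v - L h\<bar> \<le> \<epsilon> * vnorm h)"

definition vC1 :: "(nat \<Rightarrow> real) set \<Rightarrow> ((nat \<Rightarrow> real) \<Rightarrow> real)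
    \<Rightarrow> ((nat \<Rightarrow> real) \<Rightarrow> (nat \<Rightarrow> real) \<Rightarrow> real) \<Rightarrow> bool" where
  "vC1 U F DF \<longleftrightarrow> (\<forall>v\<in>U. vhasderiv U F v (DF v) \<and>
      (\<forall>\<epsilon>>0. \<exists>\<delta>>0. \<forall>w\<in>U. vnorm (vsub w v) < \<delta> \<longrightarrow> dnorm (\<lambda>h. DF w h - DF v h) < \<epsilon>))"

text \<open>DF : U -> V* compact: maps bounded subsets of U to relatively compact subsets of V*
  (every bounded sequence has a subsequence whose image is Cauchy in V*, V* being complete).\<close>
definition vcompact_map :: "(nat \<Rightarrow> real) set \<Rightarrow> ((nat \<Rightarrow> real) \<Rightarrow> (nat \<Rightarrow> real) \<Rightarrow> real) \<Rightarrow> bool" where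
  "vcompact_map U DF \<longleftrightarrow> (\<forall>(s::nat \<Rightarrow> nat \<Rightarrow> real) B. (\<forall>k. s k \<in> U \<and> vnorm (s k) \<le> B) \<longrightarrow>
      (\<exists>r::nat\<Rightarrow>nat. strict_mono r \<and> (\<forall>\<epsilon>>(0::real). \<exists>N::nat. \<forall>k\<ge>N. \<forall>l\<ge>N.
         dnorm (\<lambda>h. DF (s (r k)) h - DF (s (r l)) h) < \<epsilon>)))"

definition vcompact :: "(nat \<Rightarrow> real) set \<Rightarrow> bool" where
  "vcompact K \<longleftrightarrow> K \<subseteq> Vsp \<and> (\<forall>s::nat \<Rightarrow> nat \<Rightarrow> real. (\<forall>k. s k \<in> K) \<longrightarrow>
      (\<exists>(r::nat\<Rightarrow>nat) w. strict_mono r \<and> w \<in> K \<and> (\<lambda>k. vnorm (vsub (s (r k)) w)) \<longlonglongrightarrow> 0))"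

definition vdist :: "(nat \<Rightarrow> real) \<Rightarrow> (nat \<Rightarrow> real) set \<Rightarrow> real" where
  "vdist y K = Inf ((\<lambda>w. vnorm (vsub y w)) ` K)"

definition msup :: "((nat \<Rightarrow> real) \<Rightarrow> real) \<Rightarrow> real \<Rightarrow> real" where
  "msup G q = Sup {G v / vnorm v powr (q + 1) | v. v \<in> Vsp \<and> v \<noteq> (\<lambda>_. 0)}"

definition K0 :: "((nat \<Rightarrow> real) \<Rightarrow> real) \<Rightarrow> real \<Rightarrow> (nat \<Rightarrow> real) set" where
  "K0 G q = {v \<in> Vsp. vnorm v = 1 \<and> G v = msup G q}"

definition min_period_2pi :: "(real \<Rightarrow> real \<Rightarrow> real) \<Rightarrow> bool" where
  "min_period_2pi w \<longleftrightarrow> (\<forall>t. \<forall>x\<in>{0<..<pi}. w (t + 2*pi) x = w t x) \<and>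
     (\<forall>T. 0 < T \<and> T < 2*pi \<longrightarrow> \<not> (\<forall>t. \<forall>x\<in>{0<..<pi}. w (t + T) x = w t x))"

end

theory Submission
  imports Defs "HOL-Analysis.Henstock_Kurzweil_Integration"
begin

lemma sinsin_deriv_ne:
  fixes i k :: nat and x :: real
  assumes "i \<noteq> k"
  shows "((\<lambda>x. (sin ((real i - real k) * x) / (real i - real k) - sin ((real i + real k) * x) / (real i + real k)) / 2)
     has_real_derivative sin (real i * x) * sin (real k * x)) (at x)"
proof -
  have ne: "real i - real k \<noteq> 0" using assms by simp
  have ne2: "real i + real k \<noteq> 0" using assms by linarith
  have "((\<lambda>x. (sin ((real i - real k) * x) / (real i - real k) - sin ((real i + real k) * x) / (real i + real k)) / 2)
     has_real_derivative (cos ((real i - real k) * x) - cos ((real i + real k) * x)) / 2) (at x)"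
    by (rule derivative_eq_intros refl | use ne ne2 in simp)+
  moreover have "(cos ((real i - real k) * x) - cos ((real i + real k) * x)) / 2 = sin (real i * x) * sin (real k * x)"
    by (simp add: algebra_simps cos_diff cos_add)
  ultimately show ?thesis by simp
qed

lemma sinsin_deriv_eq:
  fixes k :: nat and x :: real
  assumes "k \<ge> 1"
  shows "((\<lambda>x. x / 2 - sin (2 * real k * x) / (4 * real k))
     has_real_derivative sin (real k * x) * sin (real k * x)) (at x)"
proof -
  have ne: "real k \<noteq> 0" using assms by simp
  have "((\<lambda>x. x / 2 - sin (2 * real k * x) / (4 * real k))
     has_real_derivative 1/2 - cos (2 * real k * x) / 2) (at x)"
    by (rule derivative_eq_intros refl | use ne in simp)+
  moreover have "1/2 - cos (2 * real k * x) / 2 = sin (real k * x) * sin (real k * x)"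
    using cos_double_sin[of "real k * x"] by (simp add: power2_eq_square mult.assoc field_simps)
  ultimately show ?thesis by simp
qed

lemma sin_nat_pi: "sin (real n * pi) = 0"
  by (metis sin_npi)

lemma sinsin_integral:
  fixes i k :: nat
  assumes "k \<ge> 1"
  shows "((\<lambda>x. sin (real i * x) * sin (real k * x)) has_integral (if i = k then pi/2 else 0)) {0..pi}"
proof (cases "i = k")
  case True
  have "((\<lambda>x. sin (real k * x) * sin (real k * x)) has_integral
     ((\<lambda>x. x / 2 - sin (2 * real k * x) / (4 * real k)) pi - (\<lambda>x. x / 2 - sin (2 * real k * x) / (4 * real k)) 0)) {0..pi}"
    apply (rule fundamental_theorem_of_calculus)
     apply simp
    unfolding has_real_derivative_iff_has_vector_derivative[symmetric]
    by (rule has_field_derivative_at_within[OF sinsin_deriv_eq[OF assms]])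
  moreover have "sin (2 * real k * pi) = 0" using sin_nat_pi[of "2*k"] by simp
  ultimately show ?thesis using True by simp
next
  case False
  let ?F = "\<lambda>x. (sin ((real i - real k) * x) / (real i - real k) - sin ((real i + real k) * x) / (real i + real k)) / 2"
  have "((\<lambda>x. sin (real i * x) * sin (real k * x)) has_integral (?F pi - ?F 0)) {0..pi}"
    apply (rule fundamental_theorem_of_calculus)
     apply simp
    unfolding has_real_derivative_iff_has_vector_derivative[symmetric]
    by (rule has_field_derivative_at_within[OF sinsin_deriv_ne[OF False]])
  moreover have "sin ((real i - real k) * pi) = 0"
  proof -
    have "sin (real_of_int (int i - int k) * pi) = 0" using sin_npi_int[of "int i - int k"] by (simp only: mult.commute)
    then show ?thesis by simp
  qed
  moreover have "sin ((real i + real k) * pi) = 0" using sin_nat_pi[of "i+k"] by simp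
  ultimately show ?thesis using False by simp
qed

lemma fourier_uniq:
  fixes c :: "nat \<Rightarrow> real"
  assumes sc: "summable (\<lambda>j. \<bar>c j\<bar>)"
    and z: "\<forall>x\<in>{0<..<pi}. (\<Sum>j. c j * sin (real j * x)) = 0"
    and k: "k \<ge> 1"
  shows "c k = 0"
proof -
  define f where "f = (\<lambda>i x. c i * sin (real i * x) * sin (real k * x))"
  have u: "uniform_limit {0..pi} (\<lambda>n x. \<Sum>i<n. f i x) (\<lambda>x. suminf (\<lambda>i. f i x)) sequentially"
  proof (rule Weierstrass_m_test[OF _ sc])
    fix n x show "norm (f n x) \<le> \<bar>c n\<bar>"
      unfolding f_def by (simp add: abs_mult mult_le_one mult.assoc mult_left_le)
  qed
  have cont: "\<And>n. continuous_on {0..pi} (\<lambda>x. \<Sum>i<n. f i x)"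
    unfolding f_def by (intro continuous_intros)
  obtain I J where I: "\<And>n. ((\<lambda>x. \<Sum>i<n. f i x) has_integral I n) {0..pi}"
    and J: "((\<lambda>x. suminf (\<lambda>i. f i x)) has_integral J) {0..pi}" and IJ: "I \<longlonglongrightarrow> J"
    using uniform_limit_integral[OF u cont] by auto
  have g0: "suminf (\<lambda>i. f i x) = 0" if "x \<in> {0..pi}" for x
  proof -
    have s1: "summable (\<lambda>j. c j * sin (real j * x))"
      by (rule summable_comparison_test[OF _ sc]) (auto intro!: exI[of _ 0] simp: abs_mult mult_le_one mult_left_le)
    have "suminf (\<lambda>i. f i x) = (\<Sum>j. c j * sin (real j * x)) * sin (real k * x)"
      unfolding f_def by (rule suminf_mult2[OF s1, symmetric])
    moreover have "(\<Sum>j. c j * sin (real j * x)) * sin (real k * x) = 0"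
    proof (cases "x = 0 \<or> x = pi")
      case True then show ?thesis using sin_nat_pi[of k] by auto
    next
      case False then show ?thesis using z that by auto
    qed
    ultimately show ?thesis by simp
  qed
  have "J = 0"
  proof -
    have "((\<lambda>x. suminf (\<lambda>i. f i x)) has_integral 0) {0..pi}"
      using has_integral_0 has_integral_cong g0 by (metis (mono_tags, lifting))
    then show ?thesis using J has_integral_unique by blast
  qed
  have In: "I n = (if k < n then c k * (pi/2) else 0)" for n
  proof -
    have "((\<lambda>x. \<Sum>i<n. f i x) has_integral (\<Sum>i<n. c i * (if i = k then pi/2 else 0))) {0..pi}"
      unfolding f_def mult.assoc
      by (intro has_integral_sum finite_lessThan has_integral_mult_right sinsin_integral[OF k])
    moreover have "(\<Sum>i<n. c i * (if i = k then pi/2 else 0)) = (\<Sum>i<n. if i = k then c k * (pi/2) else 0)"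
      by (rule sum.cong) auto
    moreover have "(\<Sum>i<n. if i = k then c k * (pi/2) else 0) = (if k < n then c k * (pi/2) else 0)"
      by (subst sum.delta) auto
    ultimately show ?thesis using has_integral_unique[OF I[of n]] by metis
  qed
  have "(\<lambda>n. I n) \<longlonglongrightarrow> c k * (pi/2)"
  proof (rule tendsto_eventually)
    show "\<forall>\<^sub>F n in sequentially. I n = c k * (pi/2)"
      using eventually_gt_at_top[of k] by eventually_elim (simp add: In)
  qed
  then have "c k * (pi/2) = J" using IJ LIMSEQ_unique by blast
  then show ?thesis using \<open>J = 0\<close> by simp
qed

lemma zero_Vsp: "(\<lambda>_. 0) \<in> Vsp" by (simp add: Vsp_def)

lemma vnorm_nonneg: assumes "z \<in> Vsp" shows "vnorm z \<ge> 0"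
proof -
  have s: "summable (\<lambda>j. (real j * z j)^2)" using assms by (simp add: Vsp_def)
  show ?thesis unfolding vnorm_def by (intro real_sqrt_ge_zero mult_nonneg_nonneg suminf_nonneg[OF s]) auto
qed

lemma vnorm_coeff:
  assumes "z \<in> Vsp" shows "pi * real j * \<bar>z j\<bar> \<le> vnorm z"
proof -
  have s: "summable (\<lambda>j. (real j * z j)^2)" using assms by (simp add: Vsp_def)
  have "(real j * z j)^2 \<le> (\<Sum>j. (real j * z j)^2)"
    using sum_le_suminf[OF s, of "{j}"] by simp
  then have "pi^2 * (real j * z j)^2 \<le> pi^2 * (\<Sum>j. (real j * z j)^2)" by (simp add: mult_left_mono)
  then have "sqrt (pi^2 * (real j * z j)^2) \<le> vnorm z" unfolding vnorm_def using real_sqrt_le_mono by blast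
  moreover have "sqrt (pi^2 * (real j * z j)^2) = pi * real j * \<bar>z j\<bar>"
    by (simp add: real_sqrt_mult abs_mult)
  ultimately show ?thesis by simp
qed

lemma sq_diff_le: fixes x y :: real shows "(x - y)^2 \<le> 2*x^2 + 2*y^2"
proof -
  have "0 \<le> (x+y)^2" by simp
  moreover have "(x-y)^2 + (x+y)^2 = 2*x^2 + 2*y^2" by (simp add: power2_eq_square algebra_simps)
  ultimately show ?thesis by linarith
qed

lemma vsub_Vsp: assumes "a \<in> Vsp" "b \<in> Vsp" shows "vsub a b \<in> Vsp"
proof -
  have sa: "summable (\<lambda>j. (real j * a j)^2)" and sb: "summable (\<lambda>j. (real j * b j)^2)"
    and a0: "a 0 = 0" and b0: "b 0 = 0"
    using assms by (auto simp: Vsp_def)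
  have sg: "summable (\<lambda>j. 2*(real j * a j)^2 + 2*(real j * b j)^2)" using sa sb by (intro summable_add summable_mult)
  have bd: "norm ((real j * (a j - b j))^2) \<le> 2*(real j * a j)^2 + 2*(real j * b j)^2" for j
  proof -
    have "(real j * (a j - b j))^2 \<le> 2*(real j * a j)^2 + 2*(real j * b j)^2"
      using sq_diff_le[of "real j * a j" "real j * b j"] by (simp only: right_diff_distrib)
    then show ?thesis by simp
  qed
  have "summable (\<lambda>j. (real j * (a j - b j))^2)"
    by (rule summable_comparison_test'[OF sg bd])
  moreover have "(\<lambda>j. (real j * vsub a b j)^2) = (\<lambda>j. (real j * (a j - b j))^2)" by (simp add: vsub_def)
  moreover have "vsub a b 0 = 0" using a0 b0 by (simp add: vsub_def)
  ultimately show ?thesis unfolding Vsp_def by simp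
qed

lemma vscale_Vsp: assumes "a \<in> Vsp" shows "vscale s a \<in> Vsp"
  and "vnorm (vscale s a) = \<bar>s\<bar> * vnorm a"
proof -
  have sa: "summable (\<lambda>j. (real j * a j)^2)" using assms by (auto simp: Vsp_def)
  have e: "(\<lambda>j. (real j * vscale s a j)^2) = (\<lambda>j. s^2 * (real j * a j)^2)"
    by (simp add: vscale_def power_mult_distrib mult_ac)
  show "vscale s a \<in> Vsp" using assms summable_mult[OF sa, of "s^2"] e by (simp add: Vsp_def vscale_def)
  have "vnorm (vscale s a) = sqrt (pi^2 * (s^2 * (\<Sum>j. (real j * a j)^2)))"
    unfolding vnorm_def e suminf_mult[OF sa] ..
  also have "... = sqrt (s^2 * (pi^2 * (\<Sum>j. (real j * a j)^2)))"
    by (simp only: mult.left_commute)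
  also have "... = sqrt (s^2) * vnorm a" unfolding vnorm_def
    by (rule real_sqrt_mult)
  finally show "vnorm (vscale s a) = \<bar>s\<bar> * vnorm a" by simp
qed

lemma vnorm_zero: "vnorm (\<lambda>_. 0) = 0" by (simp add: vnorm_def)

lemma vnorm_eq0: assumes "z \<in> Vsp" "vnorm z = 0" shows "z = (\<lambda>_. 0)"
proof
  fix j
  have s: "summable (\<lambda>j. (real j * z j)^2)" and z0: "z 0 = 0" using assms by (auto simp: Vsp_def)
  have "(\<Sum>j. (real j * z j)^2) = 0" using assms(2) by (simp add: vnorm_def)
  then have "\<forall>j. (real j * z j)^2 = 0" using suminf_eq_zero_iff[OF s] by simp
  then have "(real j * z j)^2 = 0" by blast
  then show "z j = 0" using z0 by (cases "j = 0") auto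
qed

lemma coeff_le: assumes "a \<in> Vsp" "b \<in> Vsp" shows "\<bar>a j - b j\<bar> \<le> vnorm (vsub a b)"
proof (cases "j = 0")
  case True then show ?thesis using assms vnorm_nonneg[OF vsub_Vsp[OF assms]] by (simp add: Vsp_def)
next
  case False
  have "\<bar>a j - b j\<bar> \<le> pi * real j * \<bar>a j - b j\<bar>"
  proof -
    have j1: "1 \<le> real j" using False by simp
    have p1: "1 \<le> pi" using pi_ge_two by simp
    have pj: "1 \<le> pi * real j" using mult_mono[OF p1 j1] by simp
    show ?thesis using mult_right_mono[OF pj abs_ge_zero, of "a j - b j"] by simp
  qed
  also have "... \<le> vnorm (vsub a b)" using vnorm_coeff[OF vsub_Vsp[OF assms], of j] by (simp add: vsub_def)
  finally show ?thesis .
qed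

lemma Ln_norm:
  assumes u: "u \<in> Vsp" and n: "n \<ge> 1"
  shows "Ln n u \<in> Vsp" "vnorm (Ln n u) = real n * vnorm u"
proof -
  have su: "summable (\<lambda>j. (real j * u j)^2)" and u0: "u 0 = 0" using u by (auto simp: Vsp_def)
  define f where "f = (\<lambda>k. (real k * Ln n u k)^2)"
  have sm: "strict_mono (\<lambda>j::nat. n * j)" using n by (auto intro!: strict_monoI)
  have zero: "f k = 0" if "k \<notin> range (\<lambda>j. n * j)" for k
  proof -
    have "\<not> n dvd k" using that by (auto simp: dvd_def)
    then show ?thesis by (simp add: f_def Ln_def)
  qed
  have fn: "f (n * j) = real n ^ 2 * (real j * u j)^2" for j
    using n by (simp add: f_def Ln_def power_mult_distrib)
  have "(\<lambda>j. real n ^ 2 * (real j * u j)^2) sums (real n ^ 2 * (\<Sum>j. (real j * u j)^2))"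
    by (rule sums_mult[OF summable_sums[OF su]])
  then have "(\<lambda>j. f (n * j)) sums (real n ^ 2 * (\<Sum>j. (real j * u j)^2))" by (simp add: fn)
  then have fs: "f sums (real n ^ 2 * (\<Sum>j. (real j * u j)^2))" using sums_mono_reindex[where f=f, OF sm zero] by blast
  have L0: "Ln n u 0 = 0" using u0 by (simp add: Ln_def)
  show "Ln n u \<in> Vsp" using fs L0 unfolding Vsp_def f_def by (auto simp: sums_iff)
  have e: "(\<Sum>k. (real k * Ln n u k)^2) = real n ^ 2 * (\<Sum>j. (real j * u j)^2)"
    using fs unfolding f_def by (rule sums_unique[symmetric])
  have "vnorm (Ln n u) = sqrt (real n ^ 2 * (pi^2 * (\<Sum>j. (real j * u j)^2)))"
    unfolding vnorm_def e by (simp only: mult.left_commute)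
  also have "... = sqrt (real n ^ 2) * vnorm u" unfolding vnorm_def by (rule real_sqrt_mult)
  finally show "vnorm (Ln n u) = real n * vnorm u" by simp
qed

lemma Ln_inv:
  assumes w: "w \<in> Vsp" and n: "n \<ge> 1" and H: "\<forall>j. \<not> n dvd j \<longrightarrow> w j = 0"
  shows "(\<lambda>j. w (n * j)) \<in> Vsp" "Ln n (\<lambda>j. w (n * j)) = w"
proof -
  have sw: "summable (\<lambda>j. (real j * w j)^2)" and w0: "w 0 = 0" using w by (auto simp: Vsp_def)
  have sm: "strict_mono (\<lambda>j::nat. n * j)" using n by (auto intro!: strict_monoI)
  have zero: "(\<lambda>k. (real k * w k)^2) k = 0" if "k \<notin> range (\<lambda>j. n * j)" for k
  proof -
    have "\<not> n dvd k" using that by (auto simp: dvd_def)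
    then show ?thesis using H by simp
  qed
  have "(\<lambda>j. (\<lambda>k. (real k * w k)^2) (n * j)) sums (\<Sum>k. (real k * w k)^2)"
    using sums_mono_reindex[where f="\<lambda>k. (real k * w k)^2", OF sm zero] summable_sums[OF sw] by blast
  then have "summable (\<lambda>j. (real (n * j) * w (n * j))^2)" by (simp add: sums_iff)
  then have S1: "summable (\<lambda>j. inverse (real n ^ 2) * (real (n * j) * w (n * j))^2)" by (rule summable_mult)
  have eq: "(\<lambda>j. inverse (real n ^ 2) * (real (n * j) * w (n * j))^2) = (\<lambda>j. (real j * w (n * j))^2)"
    by (rule ext) (use n in \<open>simp add: power_mult_distrib field_simps\<close>)
  have "summable (\<lambda>j. (real j * w (n * j))^2)" using S1 unfolding eq .
  then show "(\<lambda>j. w (n * j)) \<in> Vsp" using w0 by (simp add: Vsp_def)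
  show "Ln n (\<lambda>j. w (n * j)) = w"
  proof
    fix k
    show "Ln n (\<lambda>j. w (n * j)) k = w k"
    proof (cases "n dvd k")
      case True
      then have "n * (k div n) = k" by simp
      then show ?thesis using True by (simp add: Ln_def)
    next
      case False then show ?thesis using H by (simp add: Ln_def)
    qed
  qed
qed

lemma G_zero:
  assumes G_hom: "\<forall>v\<in>Vsp. \<forall>s>0. G (vscale s v) = s powr (q + 1) * G v" and q: "q > 1"
  shows "G (\<lambda>_. 0) = 0"
proof -
  have "vscale 2 (\<lambda>_. 0) = (\<lambda>_. 0)" by (simp add: vscale_def)
  then have "G (\<lambda>_. 0) = 2 powr (q + 1) * G (\<lambda>_. 0)" using G_hom zero_Vsp
    by (metis zero_less_numeral)
  moreover have "2 powr (q + 1) > (1::real)" using q by (intro gr_one_powr) auto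
  ultimately show ?thesis
    by (metis mult_cancel_right1 less_irrefl)
qed

lemma G_bdd:
  assumes G_C1: "vC1 Vsp G DG"
    and G_hom: "\<forall>v\<in>Vsp. \<forall>s>0. G (vscale s v) = s powr (q + 1) * G v" and q: "q > 1"
  shows "bdd_above {G v / vnorm v powr (q + 1) | v. v \<in> Vsp \<and> v \<noteq> (\<lambda>_. 0)}"
proof -
  have d: "vhasderiv Vsp G (\<lambda>_. 0) (DG (\<lambda>_. 0))" using G_C1 zero_Vsp unfolding vC1_def by blast
  then obtain K where K: "\<forall>x\<in>Vsp. \<bar>DG (\<lambda>_. 0) x\<bar> \<le> K * vnorm x" unfolding vhasderiv_def vblf_def by blast
  from d obtain \<delta> where dp: "\<delta> > 0" and dd: "\<forall>h\<in>Vsp. vnorm h < \<delta> \<longrightarrow> vadd (\<lambda>_. 0) h \<in> Vsp \<longrightarrow>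
      \<bar>G (vadd (\<lambda>_. 0) h) - G (\<lambda>_. 0) - DG (\<lambda>_. 0) h\<bar> \<le> 1 * vnorm h"
    unfolding vhasderiv_def by (meson zero_less_one)
  have G0: "G (\<lambda>_. 0) = 0" by (rule G_zero[OF G_hom q])
  have va: "vadd (\<lambda>_. 0) h = h" for h :: "nat \<Rightarrow> real" by (simp add: vadd_def)
  define \<rho> where "\<rho> = \<delta> / 2"
  have rp: "\<rho> > 0" using dp by (simp add: \<rho>_def)
  show ?thesis
  proof (rule bdd_aboveI[of _ "(K + 1) * \<rho> / \<rho> powr (q + 1)"], safe)
    fix v assume v: "v \<in> Vsp" "v \<noteq> (\<lambda>_. 0)"
    define nv where "nv = vnorm v"
    have nvp: "nv > 0" using vnorm_nonneg[OF v(1)] vnorm_eq0[OF v(1)] v(2) unfolding nv_def by force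
    define s where "s = \<rho> / nv"
    have sp: "s > 0" using rp nvp by (simp add: s_def)
    define hh where "hh = vscale s v"
    have hV: "hh \<in> Vsp" unfolding hh_def by (rule vscale_Vsp(1)[OF v(1)])
    have hn: "vnorm hh = \<rho>" unfolding hh_def vscale_Vsp(2)[OF v(1)] using sp nvp rp by (simp add: s_def nv_def)
    have "\<bar>G hh - DG (\<lambda>_. 0) hh\<bar> \<le> vnorm hh" using dd hV hn rp G0 va \<rho>_def by auto
    moreover have "\<bar>DG (\<lambda>_. 0) hh\<bar> \<le> K * vnorm hh" using K hV by blast
    ultimately have Gh: "G hh \<le> (K + 1) * \<rho>" using hn by (simp add: algebra_simps)
    have Ghv: "G hh = s powr (q + 1) * G v" unfolding hh_def using G_hom v(1) sp by blast
    have "nv powr (q + 1) * s powr (q + 1) = \<rho> powr (q + 1)"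
      using sp nvp by (simp add: powr_mult[symmetric] s_def)
    then have "G v / vnorm v powr (q + 1) = G hh / \<rho> powr (q + 1)"
      using sp nvp rp Ghv unfolding nv_def[symmetric] by (simp add: field_simps)
    also have "... \<le> (K + 1) * \<rho> / \<rho> powr (q + 1)"
      using Gh rp by (simp add: divide_right_mono)
    finally show "G v / vnorm v powr (q + 1) \<le> (K + 1) * \<rho> / \<rho> powr (q + 1)" .
  qed
qed

lemma K0_not_Ln:
  assumes G_C1: "vC1 Vsp G DG"
    and G_hom: "\<forall>v\<in>Vsp. \<forall>s>0. G (vscale s v) = s powr (q + 1) * G v" and q: "q > 1"
    and m_pos: "msup G q > 0"
    and G_Ln: "\<forall>n::nat. n \<ge> 2 \<longrightarrow> (\<forall>v\<in>Vsp. G (Ln n v) > 0 \<longrightarrow> G (Ln n v) < real n powr (q + 1) * G v)"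
    and w: "w \<in> K0 G q" and n: "n \<ge> 2"
  shows "\<not> (\<forall>j. \<not> n dvd j \<longrightarrow> w j = 0)"
proof
  assume H: "\<forall>j. \<not> n dvd j \<longrightarrow> w j = 0"
  have wV: "w \<in> Vsp" and w1: "vnorm w = 1" and Gw: "G w = msup G q" using w by (auto simp: K0_def)
  define u where "u = (\<lambda>j. w (n * j))"
  have n1: "n \<ge> 1" using n by simp
  have uV: "u \<in> Vsp" and Lu: "Ln n u = w" using Ln_inv[OF wV n1 H] unfolding u_def by auto
  have "vnorm w = real n * vnorm u" using Ln_norm(2)[OF uV n1] Lu by simp
  then have nu: "vnorm u = 1 / real n" using w1 n by (simp add: field_simps)
  have u0: "u \<noteq> (\<lambda>_. 0)" using nu vnorm_zero n by auto
  have "G (Ln n u) > 0" using Lu Gw m_pos by simp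
  then have "G (Ln n u) < real n powr (q + 1) * G u" using G_Ln n uV by blast
  then have lt: "msup G q < real n powr (q + 1) * G u" using Lu Gw by simp
  have "G u / vnorm u powr (q + 1) \<le> msup G q"
    unfolding msup_def by (rule cSup_upper[OF _ G_bdd[OF G_C1 G_hom q]]) (use uV u0 in blast)
  moreover have "vnorm u powr (q + 1) = 1 / real n powr (q + 1)" using nu n by (simp add: powr_divide)
  ultimately have "G u * real n powr (q + 1) \<le> msup G q" by simp
  then show False using lt by (simp add: mult.commute)
qed

lemma abs_le_mult_nat: fixes x :: real assumes "j \<noteq> 0" shows "\<bar>x\<bar> \<le> real j * \<bar>x\<bar>"
proof -
  have "1 \<le> real j" using assms by simp
  then show ?thesis using mult_right_mono[of 1 "real j" "\<bar>x\<bar>"] by simp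
qed

lemma seq_lim:
  fixes s :: "nat \<Rightarrow> nat \<Rightarrow> real"
  assumes K: "vcompact K" and s: "\<forall>k. s k \<in> K"
  shows "\<exists>r w. strict_mono r \<and> w \<in> K \<and> (\<forall>j. (\<lambda>k. s (r k) j) \<longlonglongrightarrow> w j)"
proof -
  have KV: "K \<subseteq> Vsp" using K by (simp add: vcompact_def)
  have H: "\<forall>ss::nat \<Rightarrow> nat \<Rightarrow> real. (\<forall>k. ss k \<in> K) \<longrightarrow> (\<exists>(r::nat\<Rightarrow>nat) w. strict_mono r \<and> w \<in> K \<and> (\<lambda>k. vnorm (vsub (ss (r k)) w)) \<longlonglongrightarrow> 0)"
    using K unfolding vcompact_def by (rule conjunct2)
  have "\<exists>(r::nat\<Rightarrow>nat) w. strict_mono r \<and> w \<in> K \<and> (\<lambda>k. vnorm (vsub (s (r k)) w)) \<longlonglongrightarrow> 0"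
    using spec[OF H, of s] s by (rule mp)
  then obtain r w where r: "strict_mono r" and w: "w \<in> K" and l: "(\<lambda>k. vnorm (vsub (s (r k)) w)) \<longlonglongrightarrow> 0"
    by blast
  have "(\<lambda>k. s (r k) j) \<longlonglongrightarrow> w j" for j
  proof -
    have "(\<lambda>k. s (r k) j - w j) \<longlonglongrightarrow> 0"
    proof (rule Lim_null_comparison[OF _ l])
      have "norm (s (r k) j - w j) \<le> vnorm (vsub (s (r k)) w)" for k
        using coeff_le[of "s (r k)" w j] KV s w by auto
      then show "\<forall>\<^sub>F k in sequentially. norm (s (r k) j - w j) \<le> vnorm (vsub (s (r k)) w)"
        by (intro always_eventually) auto
    qed
    then show ?thesis by (rule LIM_zero_cancel)
  qed
  then show ?thesis using r w by blast
qed

lemma claimB: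
  assumes K: "vcompact K" and nz: "\<forall>w\<in>K. vnorm w = 1"
  shows "\<exists>J \<epsilon>. \<epsilon> > 0 \<and> (\<forall>w\<in>K. \<exists>j. 1 \<le> j \<and> j \<le> J \<and> \<epsilon> < real j * \<bar>w j\<bar>)"
proof (rule ccontr)
  assume A: "\<not> ?thesis"
  have "\<forall>k. \<exists>w. w \<in> K \<and> (\<forall>j. 1 \<le> j \<and> j \<le> k \<longrightarrow> real j * \<bar>w j\<bar> \<le> inverse (real (Suc k)))"
  proof
    fix k
    have "inverse (real (Suc k)) > 0" by simp
    then have "\<not> (\<forall>w\<in>K. \<exists>j. 1 \<le> j \<and> j \<le> k \<and> inverse (real (Suc k)) < real j * \<bar>w j\<bar>)"
      using A by blast
    then obtain w where "w \<in> K" "\<forall>j. \<not> (1 \<le> j \<and> j \<le> k \<and> inverse (real (Suc k)) < real j * \<bar>w j\<bar>)"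
      by blast
    then show "\<exists>w. w \<in> K \<and> (\<forall>j. 1 \<le> j \<and> j \<le> k \<longrightarrow> real j * \<bar>w j\<bar> \<le> inverse (real (Suc k)))"
      by (intro exI[of _ w]) (auto simp: not_less)
  qed
  then obtain s where s1: "\<And>k. s k \<in> K"
    and s2: "\<And>k j. 1 \<le> j \<Longrightarrow> j \<le> k \<Longrightarrow> real j * \<bar>s k j\<bar> \<le> inverse (real (Suc k))" by metis
  obtain r w where r: "strict_mono r" and w: "w \<in> K" and l: "\<forall>j. (\<lambda>k. s (r k) j) \<longlonglongrightarrow> w j"
    using seq_lim[OF K] s1 by blast
  have KV: "K \<subseteq> Vsp" using K by (simp add: vcompact_def)
  have "w j = 0" for j
  proof (cases "j = 0")
    case True then show ?thesis using KV w by (auto simp: Vsp_def)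
  next
    case False
    have "(\<lambda>k. s (r k) j) \<longlonglongrightarrow> 0"
    proof (rule Lim_null_comparison[OF _ LIMSEQ_inverse_real_of_nat])
      show "\<forall>\<^sub>F k in sequentially. norm (s (r k) j) \<le> inverse (real (Suc k))"
        using eventually_ge_at_top[of j]
      proof eventually_elim
        case (elim k)
        have rk: "k \<le> r k" using seq_suble[OF r] by blast
        have "real j * \<bar>s (r k) j\<bar> \<le> inverse (real (Suc (r k)))" using s2[of j "r k"] False elim rk by auto
        moreover have "\<bar>s (r k) j\<bar> \<le> real j * \<bar>s (r k) j\<bar>" using abs_le_mult_nat[OF False] .
        moreover have "inverse (real (Suc (r k))) \<le> inverse (real (Suc k))" using rk by (simp add: le_imp_inverse_le)
        ultimately have "\<bar>s (r k) j\<bar> \<le> inverse (real (Suc k))" by (meson order_trans)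
        then show ?case by simp
      qed
    qed
    then show ?thesis using l LIMSEQ_unique by blast
  qed
  then have "w = (\<lambda>_. 0)" by auto
  then show False using nz w vnorm_zero by auto
qed

lemma claimA:
  assumes K: "vcompact K" and notin: "\<forall>w\<in>K. \<not> (\<forall>j. \<not> n dvd j \<longrightarrow> w j = 0)"
  shows "\<exists>\<epsilon>>0. \<forall>w\<in>K. \<exists>j. \<not> n dvd j \<and> \<epsilon> < real j * \<bar>w j\<bar>"
proof (rule ccontr)
  assume A: "\<not> ?thesis"
  have "\<forall>k. \<exists>w. w \<in> K \<and> (\<forall>j. \<not> n dvd j \<longrightarrow> real j * \<bar>w j\<bar> \<le> inverse (real (Suc k)))"
  proof
    fix k
    have "inverse (real (Suc k)) > 0" by simp
    then have "\<not> (\<forall>w\<in>K. \<exists>j. \<not> n dvd j \<and> inverse (real (Suc k)) < real j * \<bar>w j\<bar>)"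
      using A by blast
    then obtain w where "w \<in> K" "\<forall>j. \<not> (\<not> n dvd j \<and> inverse (real (Suc k)) < real j * \<bar>w j\<bar>)"
      by blast
    then show "\<exists>w. w \<in> K \<and> (\<forall>j. \<not> n dvd j \<longrightarrow> real j * \<bar>w j\<bar> \<le> inverse (real (Suc k)))"
      by (intro exI[of _ w]) (auto simp: not_less)
  qed
  then obtain s where s1: "\<And>k. s k \<in> K"
    and s2: "\<And>k j. \<not> n dvd j \<Longrightarrow> real j * \<bar>s k j\<bar> \<le> inverse (real (Suc k))" by metis
  obtain r w where r: "strict_mono r" and w: "w \<in> K" and l: "\<forall>j. (\<lambda>k. s (r k) j) \<longlonglongrightarrow> w j"
    using seq_lim[OF K] s1 by blast
  have "w j = 0" if nd: "\<not> n dvd j" for j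
  proof -
    have False0: "j \<noteq> 0" using nd by (metis dvd_0_right)
    have "(\<lambda>k. s (r k) j) \<longlonglongrightarrow> 0"
    proof (rule Lim_null_comparison[OF _ LIMSEQ_inverse_real_of_nat])
      have "norm (s (r k) j) \<le> inverse (real (Suc k))" for k
      proof -
        have rk: "k \<le> r k" using seq_suble[OF r] by blast
        have "real j * \<bar>s (r k) j\<bar> \<le> inverse (real (Suc (r k)))" using s2[OF nd] by blast
        moreover have "\<bar>s (r k) j\<bar> \<le> real j * \<bar>s (r k) j\<bar>" using abs_le_mult_nat[OF False0] .
        moreover have "inverse (real (Suc (r k))) \<le> inverse (real (Suc k))" using rk by (simp add: le_imp_inverse_le)
        ultimately have "\<bar>s (r k) j\<bar> \<le> inverse (real (Suc k))" by (meson order_trans)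
        then show ?thesis by simp
      qed
      then show "\<forall>\<^sub>F k in sequentially. norm (s (r k) j) \<le> inverse (real (Suc k))"
        by (intro always_eventually) auto
    qed
    then show ?thesis using l LIMSEQ_unique by blast
  qed
  then show False using notin w by blast
qed

lemma claimAB:
  assumes K: "vcompact K" and nz: "\<forall>w\<in>K. vnorm w = 1"
    and notin: "\<forall>n\<ge>2. \<forall>w\<in>K. \<not> (\<forall>j. \<not> n dvd j \<longrightarrow> w j = 0)"
  shows "\<exists>\<epsilon>>0. \<forall>w\<in>K. \<forall>n\<ge>2. \<exists>j. \<not> n dvd j \<and> \<epsilon> < real j * \<bar>w j\<bar>"
proof -
  obtain J \<epsilon>B where eB: "\<epsilon>B > 0" and B: "\<forall>w\<in>K. \<exists>j. 1 \<le> j \<and> j \<le> J \<and> \<epsilon>B < real j * \<bar>w j\<bar>"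
    using claimB[OF K nz] by blast
  have "\<forall>n. \<exists>\<epsilon>. 2 \<le> n \<longrightarrow> \<epsilon> > 0 \<and> (\<forall>w\<in>K. \<exists>j. \<not> n dvd j \<and> \<epsilon> < real j * \<bar>w j\<bar>)"
  proof
    fix n show "\<exists>\<epsilon>. 2 \<le> n \<longrightarrow> \<epsilon> > 0 \<and> (\<forall>w\<in>K. \<exists>j. \<not> n dvd j \<and> \<epsilon> < real j * \<bar>w j\<bar>)"
      by (cases "2 \<le> n") (use claimA[OF K, of n] notin in auto)
  qed
  then obtain f where f: "\<And>n. 2 \<le> n \<Longrightarrow> f n > 0 \<and> (\<forall>w\<in>K. \<exists>j. \<not> n dvd j \<and> f n < real j * \<bar>w j\<bar>)"
    by metis
  define \<epsilon> where "\<epsilon> = Min (insert \<epsilon>B (f ` {2..J}))"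
  have fin: "finite (insert \<epsilon>B (f ` {2..J}))" by simp
  have "\<forall>a\<in>insert \<epsilon>B (f ` {2..J}). 0 < a" using eB f by auto
  then have ep: "\<epsilon> > 0" unfolding \<epsilon>_def using Min_gr_iff[OF fin] by simp
  have leB: "\<epsilon> \<le> \<epsilon>B" unfolding \<epsilon>_def using fin by (simp add: Min_le)
  have leF: "\<epsilon> \<le> f n" if "n \<in> {2..J}" for n unfolding \<epsilon>_def by (intro Min_le fin) (use that in auto)
  show ?thesis
  proof (intro exI[of _ \<epsilon>] conjI ballI allI impI)
    show "\<epsilon> > 0" by (rule ep)
    fix w n assume w: "w \<in> K" and n: "2 \<le> (n::nat)"
    show "\<exists>j. \<not> n dvd j \<and> \<epsilon> < real j * \<bar>w j\<bar>"
    proof (cases "n \<le> J")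
      case True
      then obtain j where j: "\<not> n dvd j" "f n < real j * \<bar>w j\<bar>" using f[OF n] w by blast
      moreover have "\<epsilon> \<le> f n" using leF True n by auto
      ultimately show ?thesis by (intro exI[of _ j]) auto
    next
      case False
      obtain j where j: "1 \<le> j" "j \<le> J" "\<epsilon>B < real j * \<bar>w j\<bar>" using B w by blast
      have "\<not> n dvd j"
      proof
        assume "n dvd j"
        then have "n \<le> j" using j(1) by (simp add: dvd_imp_le)
        then show False using False j(2) by simp
      qed
      then show ?thesis using j leB by (intro exI[of _ j]) auto
    qed
  qed
qed

lemma abs_summable_V: assumes v: "v \<in> Vsp" shows "summable (\<lambda>j. \<bar>v j\<bar>)"
proof -
  have sv: "summable (\<lambda>j. (real j * v j)^2)" and v0: "v 0 = 0" using v by (auto simp: Vsp_def)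
  have si: "summable (\<lambda>j. inverse (real j ^ 2))" by (rule inverse_power_summable) simp
  have sg: "summable (\<lambda>j. (real j * v j)^2 + inverse (real j ^ 2))" by (rule summable_add[OF sv si])
  have bd: "norm \<bar>v j\<bar> \<le> (real j * v j)^2 + inverse (real j ^ 2)" for j
  proof (cases "j = 0")
    case True then show ?thesis using v0 by simp
  next
    case False
    define a where "a = real j * \<bar>v j\<bar>"
    define b where "b = inverse (real j)"
    have ab0: "0 \<le> a * b" by (simp add: a_def b_def)
    have e1: "\<bar>v j\<bar> = a * b" using False by (simp add: a_def b_def field_simps)
    have "0 \<le> (a - b)^2" by simp
    moreover have "(a - b)^2 = a^2 + b^2 - 2*a*b" by (simp add: power2_diff)
    ultimately have "a * b \<le> a^2 + b^2" using ab0 by linarith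
    moreover have "a^2 + b^2 = (real j * v j)^2 + inverse (real j ^ 2)"
      by (simp add: a_def b_def power_mult_distrib power_inverse)
    ultimately show ?thesis using e1 by simp
  qed
  show ?thesis by (rule summable_comparison_test'[OF sg bd])
qed

lemma cos_add_nat2pi: "cos (x + real j * (2*pi)) = cos x"
proof (induction j)
  case 0 then show ?case by simp
next
  case (Suc j)
  have "x + real (Suc j) * (2*pi) = (x + real j * (2*pi)) + 2*pi" by (simp add: algebra_simps)
  then show ?case using Suc.IH by (metis cos_periodic)
qed

lemma vfun_2pi: "vfun v (t + 2*pi) x = vfun v t x"
proof -
  have "cos (real j * (t + 2*pi)) = cos (real j * t)" for j
    using cos_add_nat2pi[of "real j * t" j] by (simp add: distrib_left mult.commute mult.left_commute)
  then show ?thesis unfolding vfun_def by simp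
qed

lemma period_dvd:
  assumes v: "v \<in> Vsp" and T: "0 < T" "T < 2*pi"
    and per: "\<forall>t. \<forall>x\<in>{0<..<pi}. vfun v (t + T) x = vfun v t x"
  shows "\<exists>n\<ge>2. \<forall>j. \<not> n dvd j \<longrightarrow> v j = 0"
proof -
  have sv: "summable (\<lambda>j. \<bar>v j\<bar>)" by (rule abs_summable_V[OF v])
  have v0: "v 0 = 0" using v by (simp add: Vsp_def)
  define c where "c = (\<lambda>i. v i * (cos (real i * T) - 1))"
  have sc: "summable (\<lambda>i. \<bar>c i\<bar>)"
  proof (rule summable_comparison_test'[OF summable_mult[OF sv, of 2], where N=0])
    fix i :: nat
    have "\<bar>cos (real i * T) - 1\<bar> \<le> 2" using cos_le_one[of "real i * T"] cos_ge_minus_one[of "real i * T"] by linarith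
    then have "\<bar>v i\<bar> * \<bar>cos (real i * T) - 1\<bar> \<le> \<bar>v i\<bar> * 2" by (rule mult_left_mono) simp
    then show "norm \<bar>c i\<bar> \<le> 2 * \<bar>v i\<bar>" by (simp add: c_def abs_mult mult.commute)
  qed
  have bnd: "\<bar>v i * cos y * sin z\<bar> \<le> \<bar>v i\<bar>" for i y z
  proof -
    have "\<bar>cos y * sin z\<bar> \<le> 1" using abs_cos_le_one[of y] abs_sin_le_one[of z]
      by (simp add: abs_mult mult_le_one)
    then have "\<bar>v i\<bar> * \<bar>cos y * sin z\<bar> \<le> \<bar>v i\<bar> * 1" by (rule mult_left_mono) simp
    then show ?thesis by (simp add: abs_mult mult.assoc)
  qed
  have z: "\<forall>x\<in>{0<..<pi}. (\<Sum>i. c i * sin (real i * x)) = 0"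
  proof
    fix x :: real assume x: "x \<in> {0<..<pi}"
    have s1: "summable (\<lambda>i. v i * cos (real i * (0 + T)) * sin (real i * x))"
      by (rule summable_comparison_test'[OF sv, where N=0]) (simp add: bnd)
    have s2: "summable (\<lambda>i. v i * cos (real i * 0) * sin (real i * x))"
      by (rule summable_comparison_test'[OF sv, where N=0]) (simp only: real_norm_def bnd)
    have "vfun v (0 + T) x - vfun v 0 x = (\<Sum>i. v i * cos (real i * (0 + T)) * sin (real i * x) - v i * cos (real i * 0) * sin (real i * x))"
      unfolding vfun_def by (rule suminf_diff[OF s1 s2])
    also have "... = (\<Sum>i. c i * sin (real i * x))"
      by (simp add: c_def algebra_simps)
    finally have eq: "vfun v (0 + T) x - vfun v 0 x = (\<Sum>i. c i * sin (real i * x))" .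
    have "vfun v (0 + T) x = vfun v 0 x" using per x by blast
    then show "(\<Sum>i. c i * sin (real i * x)) = 0" using eq by simp
  qed
  have cz: "c k = 0" for k
  proof (cases "k = 0")
    case True then show ?thesis using v0 by (simp add: c_def)
  next
    case False then show ?thesis using fourier_uniq[OF sc z] by simp
  qed
  have Acase: "v j = 0 \<or> (\<exists>k::int. real j * T = of_int k * 2 * pi)" for j
  proof -
    have "v j = 0 \<or> cos (real j * T) = 1" using cz[of j] by (simp add: c_def)
    then show ?thesis using cos_one_2pi_int by blast
  qed
  show ?thesis
  proof (cases "\<forall>j. v j = 0")
    case True then show ?thesis by (intro exI[of _ "2::nat"]) auto
  next
    case False
    then obtain j0 where j0: "v j0 \<noteq> 0" by blast
    define A where "A = {n::nat. 1 \<le> n \<and> (\<exists>k::int. real n * T = of_int k * 2 * pi)}"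
    have inA: "j \<in> A" if "v j \<noteq> 0" for j
    proof -
      have "j \<noteq> 0" using that v0 by (metis)
      then show ?thesis using Acase[of j] that unfolding A_def by auto
    qed
    define n0 where "n0 = (LEAST n. n \<in> A)"
    have n0A: "n0 \<in> A" unfolding n0_def by (rule LeastI[of "\<lambda>n. n \<in> A", OF inA[OF j0]])
    have n0le: "n0 \<le> n" if "n \<in> A" for n unfolding n0_def by (rule Least_le[of "\<lambda>n. n \<in> A", OF that])
    have n01: "n0 \<ge> 1" using n0A by (simp add: A_def)
    have n0ge2: "n0 \<ge> 2"
    proof (rule ccontr)
      assume "\<not> n0 \<ge> 2"
      with n01 have "n0 = 1" by simp
      with n0A obtain k :: int where k: "T = of_int k * 2 * pi" by (auto simp: A_def)
      then have "0 < real_of_int k * (2 * pi)" "real_of_int k * (2 * pi) < 1 * (2 * pi)" using T by (simp_all add: mult.assoc)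
      then have "0 < real_of_int k" "real_of_int k < 1"
        by (simp_all add: zero_less_mult_iff mult_less_cancel_right pi_gt_zero)
      then have "0 < k" "k < 1" by simp_all
      then show False by simp
    qed
    have "n0 dvd j" if vj: "v j \<noteq> 0" for j
    proof -
      obtain k1 :: int where k1: "real j * T = of_int k1 * 2 * pi" using inA[OF vj] by (auto simp: A_def)
      obtain k2 :: int where k2: "real n0 * T = of_int k2 * 2 * pi" using n0A by (auto simp: A_def)
      define r where "r = j mod n0"
      have jr: "j = (j div n0) * n0 + r" by (simp add: r_def)
      then have "real j = real (j div n0) * real n0 + real r" by (metis of_nat_add of_nat_mult)
      then have "real r * T = real j * T - real (j div n0) * (real n0 * T)" by (simp add: algebra_simps)
      also have "... = of_int (k1 - int (j div n0) * k2) * 2 * pi" unfolding k1 k2 by (simp add: algebra_simps)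
      finally have rT: "real r * T = of_int (k1 - int (j div n0) * k2) * 2 * pi" .
      have rlt: "r < n0" using n01 by (simp add: r_def)
      have "r = 0"
      proof (rule ccontr)
        assume "r \<noteq> 0"
        then have "r \<in> A" unfolding A_def using rT by (intro CollectI conjI exI[of _ "k1 - int (j div n0) * k2"]) auto
        then show False using n0le rlt by fastforce
      qed
      then show ?thesis by (simp add: r_def dvd_eq_mod_eq_0)
    qed
    then show ?thesis using n0ge2 by blast
  qed
qed

theorem lemma4p3:
  fixes q C0 :: real
    and G :: "(nat \<Rightarrow> real) \<Rightarrow> real"
    and DG :: "(nat \<Rightarrow> real) \<Rightarrow> (nat \<Rightarrow> real) \<Rightarrow> real"
    and h :: "real \<Rightarrow> real"
  assumes q: "q > 1"
    and C0: "C0 > 0"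
    and G_C1: "vC1 Vsp G DG"
    and DG_compact: "vcompact_map Vsp DG"
    and G_hom: "\<forall>v\<in>Vsp. \<forall>s>0. G (vscale s v) = s powr (q + 1) * G v"
    and m_pos: "msup G q > 0"
    and K0_ne: "K0 G q \<noteq> {}"
    and K0_cpt: "vcompact (K0 G q)"
    and h_lim: "(h \<longlongrightarrow> 0) (at_right 0)"
    and G_Ln: "\<forall>n::nat. n \<ge> 2 \<longrightarrow> (\<forall>v\<in>Vsp. G (Ln n v) > 0 \<longrightarrow> G (Ln n v) < real n powr (q + 1) * G v)"
  shows "\<exists>C9. 0 < C9 \<and> C9 \<le> C0 \<and>
    (\<forall>\<mu> r0 \<alpha> (R :: (nat \<Rightarrow> real) \<Rightarrow> real) (DR :: (nat \<Rightarrow> real) \<Rightarrow> (nat \<Rightarrow> real) \<Rightarrow> real) v.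
       let m = msup G q;
           \<Phi> = (\<lambda>w. \<mu> / 2 * (vnorm w)^2 - G w + R w)
       in
       \<mu> > 0 \<longrightarrow> r0 > 0 \<longrightarrow> \<alpha> > 0 \<longrightarrow>
       vC1 (vball r0) R DR \<longrightarrow> vcompact_map (vball r0) DR \<longrightarrow>
       R (\<lambda>_. 0) = 0 \<longrightarrow>
       (\<forall>w\<in>vball r0. \<bar>DR w w\<bar> \<le> \<alpha> * vnorm w powr (q + 1)) \<longrightarrow>
       \<alpha> / m \<le> C9 \<longrightarrow>
       (\<mu> / m) powr (1 / (q - 1)) \<le> C0 * r0 \<longrightarrow>
       v \<in> vball r0 \<longrightarrow>
       vhasderiv (vball r0) \<Phi> v (\<lambda>_. 0) \<longrightarrow>
       (\<exists>y\<in>Vsp. v = vscale ((\<mu> / (m * (q + 1))) powr (1 / (q - 1))) y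
                 \<and> vdist y (K0 G q) \<le> h (\<alpha> / m)) \<longrightarrow>
       min_period_2pi (vfun v))"
proof -
  have nz: "\<forall>w\<in>K0 G q. vnorm w = 1" and KV: "K0 G q \<subseteq> Vsp" by (auto simp: K0_def)
  have notin: "\<forall>n\<ge>2. \<forall>w\<in>K0 G q. \<not> (\<forall>j. \<not> n dvd j \<longrightarrow> w j = 0)"
    using K0_not_Ln[OF G_C1 G_hom q m_pos G_Ln] by blast
  obtain \<epsilon> where ep: "\<epsilon> > 0" and E: "\<forall>w\<in>K0 G q. \<forall>n\<ge>2. \<exists>j. \<not> n dvd j \<and> \<epsilon> < real j * \<bar>w j\<bar>"
    using claimAB[OF K0_cpt nz notin] by blast
  define \<delta>0 where "\<delta>0 = min 1 (pi * \<epsilon>)"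
  have d0p: "\<delta>0 > 0" using ep by (simp add: \<delta>0_def)
  have "\<forall>\<^sub>F s in at_right 0. h s < \<delta>0" using order_tendstoD(2)[OF h_lim d0p] .
  then obtain d where dp: "d > (0::real)" and hd: "\<And>s. 0 < s \<Longrightarrow> s < d \<Longrightarrow> h s < \<delta>0"
    unfolding eventually_at_right_field by blast
  define C9 where "C9 = min C0 (d/2)"
  show ?thesis
  proof (intro exI[of _ C9] conjI allI)
    show "0 < C9" using C0 dp by (simp add: C9_def)
    show "C9 \<le> C0" by (simp add: C9_def)
    fix \<mu> r0 \<alpha> :: real and R :: "(nat \<Rightarrow> real) \<Rightarrow> real" and DR :: "(nat \<Rightarrow> real) \<Rightarrow> (nat \<Rightarrow> real) \<Rightarrow> real" and v
    have core: "min_period_2pi (vfun v)" if mu: "\<mu> > 0" and al: "\<alpha> > 0" and aC: "\<alpha> / msup G q \<le> C9"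
      and vb: "v \<in> vball r0"
      and ex: "\<exists>y\<in>Vsp. v = vscale ((\<mu> / (msup G q * (q + 1))) powr (1 / (q - 1))) y \<and> vdist y (K0 G q) \<le> h (\<alpha> / msup G q)"
    proof -
      define m where "m = msup G q"
      have mp: "m > 0" using m_pos by (simp add: m_def)
      obtain y where yV: "y \<in> Vsp" and vy: "v = vscale ((\<mu> / (m * (q + 1))) powr (1 / (q - 1))) y"
        and yd: "vdist y (K0 G q) \<le> h (\<alpha> / m)" using ex unfolding m_def by blast
      define c where "c = (\<mu> / (m * (q + 1))) powr (1 / (q - 1))"
      have cp: "c > 0" unfolding c_def using mu mp q by simp
      have sp: "0 < \<alpha> / m" using al mp by simp
      have "\<alpha> / m < d" using aC dp unfolding C9_def m_def by linarith
      then have "h (\<alpha> / m) < \<delta>0" using hd sp by blast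
      then have "Inf ((\<lambda>w. vnorm (vsub y w)) ` K0 G q) < \<delta>0" using yd unfolding vdist_def by linarith
      then obtain w where wK: "w \<in> K0 G q" and wd: "vnorm (vsub y w) < \<delta>0"
        using cInf_lessD[of "(\<lambda>w. vnorm (vsub y w)) ` K0 G q" \<delta>0] K0_ne by blast
      have wV: "w \<in> Vsp" using wK KV by blast
      have vV: "v \<in> Vsp" using vb by (simp add: vball_def)
      show ?thesis unfolding min_period_2pi_def
      proof (intro conjI allI ballI impI notI)
        fix t x show "vfun v (t + 2 * pi) x = vfun v t x" by (rule vfun_2pi)
      next
        fix T :: real assume T: "0 < T \<and> T < 2 * pi" and per: "\<forall>t. \<forall>x\<in>{0<..<pi}. vfun v (t + T) x = vfun v t x"
        obtain n where n: "n \<ge> 2" and vz: "\<forall>j. \<not> n dvd j \<longrightarrow> v j = 0"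
          using period_dvd[OF vV _ _ per] T by blast
        obtain j where nj: "\<not> n dvd j" and jw: "\<epsilon> < real j * \<bar>w j\<bar>" using E wK n by blast
        have "c * y j = 0" using vz nj vy unfolding c_def[symmetric] by (simp add: vscale_def)
        then have yj: "y j = 0" using cp by simp
        have "pi * real j * \<bar>vsub y w j\<bar> \<le> vnorm (vsub y w)" by (rule vnorm_coeff[OF vsub_Vsp[OF yV wV]])
        moreover have "\<bar>vsub y w j\<bar> = \<bar>w j\<bar>" using yj by (simp add: vsub_def)
        ultimately have a2: "pi * (real j * \<bar>w j\<bar>) \<le> vnorm (vsub y w)" by (simp add: mult.assoc)
        have "\<delta>0 \<le> pi * \<epsilon>" by (simp add: \<delta>0_def)
        then have "pi * (real j * \<bar>w j\<bar>) < pi * \<epsilon>" using a2 wd by linarith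
        then have "real j * \<bar>w j\<bar> < \<epsilon>" using mult_less_cancel_left_pos[OF pi_gt_zero] by blast
        then show False using jw by simp
      qed
    qed
    then show "let m = msup G q; \<Phi> = (\<lambda>w. \<mu> / 2 * (vnorm w)^2 - G w + R w) in
       \<mu> > 0 \<longrightarrow> r0 > 0 \<longrightarrow> \<alpha> > 0 \<longrightarrow>
       vC1 (vball r0) R DR \<longrightarrow> vcompact_map (vball r0) DR \<longrightarrow>
       R (\<lambda>_. 0) = 0 \<longrightarrow>
       (\<forall>w\<in>vball r0. \<bar>DR w w\<bar> \<le> \<alpha> * vnorm w powr (q + 1)) \<longrightarrow>
       \<alpha> / m \<le> C9 \<longrightarrow>
       (\<mu> / m) powr (1 / (q - 1)) \<le> C0 * r0 \<longrightarrow>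
       v \<in> vball r0 \<longrightarrow>
       vhasderiv (vball r0) \<Phi> v (\<lambda>_. 0) \<longrightarrow>
       (\<exists>y\<in>Vsp. v = vscale ((\<mu> / (m * (q + 1))) powr (1 / (q - 1))) y
                 \<and> vdist y (K0 G q) \<le> h (\<alpha> / m)) \<longrightarrow>
       min_period_2pi (vfun v)"
      unfolding Let_def by blast
  qed
qed

end
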